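(* Let $(\mathcal{N},\mathcal{E})$ be a connected graph with $N$ nodes, $E$ edges and incidence matrix $\mathbf{B}$, with nodes numbered so that those outside a nonempty strict subset $\mathcal{N}_0\subset\mathcal{N}$ come first, and partition $\mathbf{B}^\top=[\mathbf{B}_1^\top~\mathbf{B}_0^\top]$ accordingly ($\mathbf{B}_0$ = rows indexed by $\mathcal{N}_0$). Let $w_e\in\mathbb{C}\setminus\{0\}$, $\mathbf{W}=\mathrm{diag}(\{w_e\}_{e\in\mathcal{E}})$, and let $\mathbf{P}$ be a real full-column-rank matrix with $\mathrm{range}(\mathbf{P})=\mathrm{null}(\mathbf{B}_0)$; assume $\mathbf{P}^\top\mathbf{W}\mathbf{P}$ and $\mathbf{B}_0\mathbf{W}^{-1}\mathbf{B}_0^\top$ are invertible (e.g. if $\mathrm{Re}(w_e)\ge0$, $\mathrm{Im}(w_e)\ge0$ for all $e$). Define the Laplacian $\widetilde{\mathbf{W}}=\mathbf{B}\mathbf{W}^{-1}\mathbf{B}^\top=\begin{bmatrix}\widetilde{\mathbf{W}}_{11}&\widetilde{\mathbf{W}}_{10}\\ \widetilde{\mathbf{W}}_{10}^\top&\widetilde{\mathbf{W}}_{00}\end{bmatrix}$, with $\widetilde{\mathbf{W}}_{00}$ the block indexed by $\mathcal{N}_0$. Then $$\mathbf{B}_1\mathbf{P}(\mathbf{P}^\top\mathbf{W}\mathbf{P})^{-1}\mathbf{P}^\top\mathbf{B}_1^\top=\widetilde{\mathbf{W}}\setminus\widetilde{\mathbf{W}}_{00}:=\widetilde{\mathbf{W}}_{11}-\widetilde{\mathbf{W}}_{10}\widetilde{\mathbf{W}}_{00}^{-1}\widetilde{\mathbf{W}}_{10}^\top.$$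 In particular, for edge resistances $r_e\ge0$, inductances $\ell_e>0$ and $\omega>0$, with $\mathbf{R}=\mathrm{diag}(\{r_e\})$, $\mathbf{L}=\mathrm{diag}(\{\ell_e\})$: (a) taking $\mathbf{W}=\mathbf{R}+\jmath\omega\mathbf{L}$ gives $\mathbf{B}_1\mathbf{P}(\mathbf{P}^\top(\mathbf{R}+\jmath\omega\mathbf{L})\mathbf{P})^{-1}\mathbf{P}^\top\mathbf{B}_1^\top=\mathbf{Y}_{11}-\mathbf{Y}_{10}\mathbf{Y}_{00}^{-1}\mathbf{Y}_{10}^\top$ (the Kron-reduced admittance matrix), where $\mathbf{Y}=\mathbf{B}(\mathbf{R}+\jmath\omega\mathbf{L})^{-1}\mathbf{B}^\top$ is partitioned in the same way; (b) taking $\mathbf{W}=\mathbf{L}$ gives $\mathbf{B}_1\mathbf{P}(\mathbf{P}^\top\mathbf{L}\mathbf{P})^{-1}\mathbf{P}^\top\mathbf{B}_1^\top=\widetilde{\mathbf{L}}_{11}-\widetilde{\mathbf{L}}_{10}\widetilde{\mathbf{L}}_{00}^{-1}\widetilde{\mathbf{L}}_{10}^\top$, where $\widetilde{\mathbf{L}}=\mathbf{B}\mathbf{L}^{-1}\mathbf{B}^\top$ is partitioned in the same way.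
   Context: Each edge is given an arbitrary orientation $e=(m,n)$. The incidence matrix $\mathbf{B}\in\{0,\pm1\}^{N\times E}$ has entries $B_{k,e}=1$ if $k=m$, $B_{k,e}=-1$ if $k=n$, for $e=(m,n)$, and $B_{k,e}=0$ otherwise. $^\top$ denotes the (non-conjugate) transpose and $\jmath=\sqrt{-1}$. *)

theory Defs
  imports Complex_Main "Jordan_Normal_Form.Matrix"
begin

text \<open>Graph on nodes 0..<N given by a list of oriented edges (m,n), edge e = edges ! e.\<close>

definition valid_graph :: "nat \<Rightarrow> (nat \<times> nat) list \<Rightarrow> bool" where
  "valid_graph N edges \<longleftrightarrow> (\<forall>e \<in> set edges. fst e < N \<and> snd e < N \<and> fst e \<noteq> snd e)"

definition adj_rel :: "(nat \<times> nat) list \<Rightarrow> nat rel" where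
  "adj_rel edges = set edges \<union> (set edges)\<inverse>"

definition connected_graph :: "nat \<Rightarrow> (nat \<times> nat) list \<Rightarrow> bool" where
  "connected_graph N edges \<longleftrightarrow> valid_graph N edges \<and>
     (\<forall>u < N. \<forall>v < N. (u, v) \<in> (adj_rel edges)\<^sup>*)"

definition incidence :: "nat \<Rightarrow> (nat \<times> nat) list \<Rightarrow> 'a::ring_1 mat" where
  "incidence N edges = mat N (length edges)
     (\<lambda>(k, e). if k = fst (edges ! e) then 1 else if k = snd (edges ! e) then -1 else 0)"

definition subm :: "'a mat \<Rightarrow> nat \<Rightarrow> nat \<Rightarrow> nat \<Rightarrow> nat \<Rightarrow> 'a mat" where
  "subm A r0 nr c0 nc = mat nr nc (\<lambda>(i, j). A $$ (r0 + i, c0 + j))"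

text \<open>Matrix inverse (meaningful for invertible square matrices).\<close>
definition minv :: "'a::field mat \<Rightarrow> 'a mat" where
  "minv A = (SOME B. inverts_mat A B \<and> inverts_mat B A)"

definition schur_compl :: "'a::field mat \<Rightarrow> nat \<Rightarrow> nat \<Rightarrow> 'a mat" where
  "schur_compl M n1 n0 =
     subm M 0 n1 0 n1 - subm M 0 n1 n1 n0 * minv (subm M n1 n0 n1 n0) * transpose_mat (subm M 0 n1 n1 n0)"

end

theory Submission
  imports Defs "Jordan_Normal_Form.Determinant"
begin


lemma minv_props:
  fixes A :: "'a::field mat"
  assumes inv: "invertible_mat A" and A: "A \<in> carrier_mat n n"
  shows "minv A \<in> carrier_mat n n" "A * minv A = 1\<^sub>m n" "minv A * A = 1\<^sub>m n"
proof -
  have ex: "\<exists>B. inverts_mat A B \<and> inverts_mat B A" using inv unfolding invertible_mat_def by auto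
  have s: "inverts_mat A (minv A) \<and> inverts_mat (minv A) A"
    unfolding minv_def by (rule someI_ex[OF ex])
  hence 1: "A * minv A = 1\<^sub>m n" and 2: "minv A * A = 1\<^sub>m (dim_row (minv A))"
    using A unfolding inverts_mat_def by auto
  have "dim_col (minv A) = n" using 1 A by (metis dim_col_mat(1) index_mult_mat(3) index_one_mat(3))
  moreover have "dim_row (minv A) = n" using 2 A by (metis carrier_matD(2) index_mult_mat(3) index_one_mat(3))
  ultimately show "minv A \<in> carrier_mat n n" by auto
  then show "A * minv A = 1\<^sub>m n" "minv A * A = 1\<^sub>m n" using 1 2 by auto
qed

lemma minv_unique:
  fixes A :: "'a::field mat"
  assumes A: "A \<in> carrier_mat n n" and B: "B \<in> carrier_mat n n"
    and AB: "A * B = 1\<^sub>m n" and BA: "B * A = 1\<^sub>m n"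
  shows "minv A = B"
proof -
  have inv: "invertible_mat A" unfolding invertible_mat_def inverts_mat_def square_mat.simps
    using A B AB BA by (intro conjI exI[of _ B]) auto
  note m = minv_props[OF inv A]
  have "minv A = minv A * (A * B)" using m(1) AB by simp
  also have "\<dots> = (minv A * A) * B" using m(1) A B by (simp add: assoc_mult_mat)
  also have "\<dots> = B" using m(3) B by simp
  finally show ?thesis .
qed

lemma inj_imp_invertible:
  fixes A :: "'a::field mat"
  assumes A: "A \<in> carrier_mat n n" and inj: "\<forall>v\<in>carrier_vec n. A *\<^sub>v v = 0\<^sub>v n \<longrightarrow> v = 0\<^sub>v n"
  shows "invertible_mat A"
proof -
  have "det A \<noteq> 0" using det_0_iff_vec_prod_zero_field[OF A] inj by auto
  from det_non_zero_imp_unit[OF A this, of "()"]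
  obtain B where B: "B \<in> carrier_mat n n" "B * A = 1\<^sub>m n" "A * B = 1\<^sub>m n"
    unfolding Units_def ring_mat_def by auto
  show ?thesis unfolding invertible_mat_def inverts_mat_def square_mat.simps
    using A B by (intro conjI exI[of _ B]) auto
qed



lemma core:
  fixes W M Pc B0 T Si :: "'a::field mat"
  assumes W: "W \<in> carrier_mat E E" and M: "M \<in> carrier_mat E E" and WM: "W * M = 1\<^sub>m E"
    and Pc: "Pc \<in> carrier_mat E k" and B0: "B0 \<in> carrier_mat n0 E" and B0P: "B0 * Pc = 0\<^sub>m n0 k"
    and range: "\<forall>y\<in>carrier_vec E. B0 *\<^sub>v y = 0\<^sub>v n0 \<longrightarrow> (\<exists>x\<in>carrier_vec k. y = Pc *\<^sub>v x)"
    and T: "T \<in> carrier_mat k k" and TA: "T * (transpose_mat Pc * W * Pc) = 1\<^sub>m k"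
    and Si: "Si \<in> carrier_mat n0 n0" and SSi: "(B0 * M * transpose_mat B0) * Si = 1\<^sub>m n0"
  shows "Pc * T * transpose_mat Pc = M - M * transpose_mat B0 * Si * B0 * M"
proof -
  define H where "H = M - M * transpose_mat B0 * Si * B0 * M"
  define K where "K = M * transpose_mat B0 * Si * B0 * M"
  have B0t: "transpose_mat B0 \<in> carrier_mat E n0" using B0 by simp
  have Pct: "transpose_mat Pc \<in> carrier_mat k E" using Pc by simp
  have K: "K \<in> carrier_mat E E" unfolding K_def
    by (intro mult_carrier_mat[OF _ M] mult_carrier_mat[OF _ B0] mult_carrier_mat[OF _ Si] mult_carrier_mat[OF M B0t])
  have H: "H \<in> carrier_mat E E" unfolding H_def K_def[symmetric] using K by (rule minus_carrier_mat)
  have B0M: "B0 * M \<in> carrier_mat n0 E" using B0 M by (rule mult_carrier_mat)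
  have S: "B0 * M * transpose_mat B0 \<in> carrier_mat n0 n0" using B0M B0t by (rule mult_carrier_mat)
  have MBt: "M * transpose_mat B0 \<in> carrier_mat E n0" using M B0t by (rule mult_carrier_mat)
  have R: "Si * (B0 * M) \<in> carrier_mat n0 E" using Si B0M by (rule mult_carrier_mat)
  have MBS: "M * transpose_mat B0 * Si \<in> carrier_mat E n0" using MBt Si by (rule mult_carrier_mat)
  have Kalt: "K = (M * transpose_mat B0) * (Si * (B0 * M))"
    unfolding K_def using assoc_mult_mat[OF MBS B0 M] assoc_mult_mat[OF MBt Si B0M] by metis
  have "B0 * K = (B0 * (M * transpose_mat B0)) * (Si * (B0 * M))"
    unfolding Kalt using assoc_mult_mat[OF B0 MBt R] by metis
  also have "B0 * (M * transpose_mat B0) = B0 * M * transpose_mat B0"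
    using assoc_mult_mat[OF B0 M B0t] by metis
  also have "(B0 * M * transpose_mat B0) * (Si * (B0 * M)) = ((B0 * M * transpose_mat B0) * Si) * (B0 * M)"
    using assoc_mult_mat[OF S Si B0M] by metis
  also have "\<dots> = B0 * M" using SSi left_mult_one_mat[OF B0M] by simp
  finally have B0K: "B0 * K = B0 * M" .
  have "B0 * H = B0 * M - B0 * K"
    unfolding H_def K_def[symmetric] by (rule mult_minus_distrib_mat[OF B0 M K])
  also have "\<dots> = 0\<^sub>m n0 E" unfolding B0K using B0M by (rule minus_r_inv_mat)
  finally have B0H: "B0 * H = 0\<^sub>m n0 E" .
  have "\<forall>j<E. \<exists>x. x \<in> carrier_vec k \<and> col H j = Pc *\<^sub>v x"
  proof (intro allI impI)
    fix j assume j: "j < E"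
    have "B0 *\<^sub>v col H j = col (B0 * H) j" using col_mult2[OF B0 H j] by simp
    also have "\<dots> = 0\<^sub>v n0" unfolding B0H using j by (intro eq_vecI) auto
    finally have "B0 *\<^sub>v col H j = 0\<^sub>v n0" .
    moreover have "col H j \<in> carrier_vec E" using H j by simp
    ultimately show "\<exists>x. x \<in> carrier_vec k \<and> col H j = Pc *\<^sub>v x" using range by blast
  qed
  then obtain f where f: "\<And>j. j < E \<Longrightarrow> f j \<in> carrier_vec k \<and> col H j = Pc *\<^sub>v f j" by metis
  define X where "X = mat k E (\<lambda>(i,j). f j $ i)"
  have X: "X \<in> carrier_mat k E" unfolding X_def by auto
  have HX: "H = Pc * X"
  proof (rule eq_matI)
    fix i j assume i: "i < dim_row (Pc * X)" and j: "j < dim_col (Pc * X)"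
    hence i': "i < E" and j': "j < E" using Pc X by auto
    have cX: "col X j = f j" unfolding X_def using j' f[OF j'] by auto
    have "(Pc * X) $$ (i,j) = row Pc i \<bullet> col X j" using i j by simp
    also have "\<dots> = (Pc *\<^sub>v f j) $ i" using cX i' Pc by simp
    also have "\<dots> = col H j $ i" using f[OF j'] by simp
    also have "\<dots> = H $$ (i,j)" using H i' j' by simp
    finally show "H $$ (i,j) = (Pc * X) $$ (i,j)" by simp
  qed (use H Pc X in auto)
  have PW: "transpose_mat Pc * W \<in> carrier_mat k E" using Pct W by (rule mult_carrier_mat)
  have "transpose_mat Pc * W * H = transpose_mat Pc * W * M - transpose_mat Pc * W * K"
    unfolding H_def K_def[symmetric] by (rule mult_minus_distrib_mat[OF PW M K])
  also have "transpose_mat Pc * W * M = transpose_mat Pc"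
    using assoc_mult_mat[OF Pct W M] WM right_mult_one_mat[OF Pct] by metis
  also have "transpose_mat Pc * W * K = ((transpose_mat Pc * W) * (M * transpose_mat B0)) * (Si * (B0 * M))"
    unfolding Kalt using assoc_mult_mat[OF PW MBt R] by metis
  also have "(transpose_mat Pc * W) * (M * transpose_mat B0) = transpose_mat Pc * transpose_mat B0"
    using assoc_mult_mat[OF Pct W MBt] assoc_mult_mat[OF W M B0t] WM left_mult_one_mat[OF B0t] by metis
  also have "transpose_mat Pc * transpose_mat B0 = 0\<^sub>m k n0"
    using transpose_mult[OF B0 Pc] B0P by simp
  also have "0\<^sub>m k n0 * (Si * (B0 * M)) = 0\<^sub>m k E" using R by (rule left_mult_zero_mat)
  also have "transpose_mat Pc - 0\<^sub>m k E = transpose_mat Pc" using Pct by (intro eq_matI) auto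
  finally have PWH: "transpose_mat Pc * W * H = transpose_mat Pc" .
  have "X = (T * (transpose_mat Pc * W * Pc)) * X" using TA X by simp
  also have "\<dots> = T * ((transpose_mat Pc * W) * (Pc * X))"
    using assoc_mult_mat[OF T mult_carrier_mat[OF PW Pc] X] assoc_mult_mat[OF PW Pc X] by metis
  also have "\<dots> = T * transpose_mat Pc" using PWH HX by simp
  finally have XT: "X = T * transpose_mat Pc" .
  have "Pc * T * transpose_mat Pc = H" using HX XT assoc_mult_mat[OF Pc T Pct] by metis
  thus ?thesis unfolding H_def .
qed



lemma assoc_dim: "dim_col (A::'a::semiring_0 mat) = dim_row B \<Longrightarrow> dim_col B = dim_row C \<Longrightarrow> (A * B) * C = A * (B * C)"
  by (rule assoc_mult_mat[of A "dim_row A" "dim_col A" B "dim_col B" C "dim_col C"]) auto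

lemma subm_carrier[simp]: "subm A r0 a c0 b \<in> carrier_mat a b"
  unfolding subm_def by auto
lemma subm_dims[simp]: "dim_row (subm A r0 a c0 b) = a" "dim_col (subm A r0 a c0 b) = b"
  unfolding subm_def by auto

lemma subm_mult:
  fixes A :: "'a::semiring_0 mat"
  assumes "r0 + a \<le> dim_row A" "c0 + b \<le> dim_col C" "dim_col A = dim_row C"
  shows "subm (A * C) r0 a c0 b = subm A r0 a 0 (dim_col A) * subm C 0 (dim_row C) c0 b"
  using assms by (intro eq_matI) (auto simp: subm_def scalar_prod_def)

lemma subm_transpose:
  assumes "r0 + a \<le> dim_col A" "c0 + b \<le> dim_row A"
  shows "subm (transpose_mat A) r0 a c0 b = transpose_mat (subm A c0 b r0 a)"
  using assms by (intro eq_matI) (auto simp: subm_def)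

lemma subm_full: "A \<in> carrier_mat n m \<Longrightarrow> subm A 0 n 0 m = A"
  by (intro eq_matI) (auto simp: subm_def)



lemma blockY:
  fixes Bc M :: "'a::comm_ring_1 mat"
  assumes Bc: "Bc \<in> carrier_mat N E" and M: "M \<in> carrier_mat E E"
    and ra: "r0 + a \<le> N" and cb: "c0 + b \<le> N"
  shows "subm (Bc * M * transpose_mat Bc) r0 a c0 b = subm Bc r0 a 0 E * M * transpose_mat (subm Bc c0 b 0 E)"
proof -
  have d1: "r0 + a \<le> dim_row (Bc * M)" "c0 + b \<le> dim_col (transpose_mat Bc)" "dim_col (Bc * M) = dim_row (transpose_mat Bc)"
    using Bc M ra cb by auto
  have e1: "dim_col (Bc * M) = E" "dim_row (transpose_mat Bc) = E" using Bc M by auto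
  have "subm (Bc * M * transpose_mat Bc) r0 a c0 b = subm (Bc * M) r0 a 0 E * subm (transpose_mat Bc) 0 E c0 b"
    using subm_mult[OF d1] unfolding e1 .
  also have "subm (Bc * M) r0 a 0 E = subm Bc r0 a 0 E * M"
  proof -
    have d2: "r0 + a \<le> dim_row Bc" "0 + E \<le> dim_col M" "dim_col Bc = dim_row M" using Bc M ra by auto
    have e2: "dim_col Bc = E" "dim_row M = E" using Bc M by auto
    show ?thesis using subm_mult[OF d2] subm_full[OF M] unfolding e2 by simp
  qed
  also have "subm (transpose_mat Bc) 0 E c0 b = transpose_mat (subm Bc c0 b 0 E)"
    using Bc cb by (intro subm_transpose) auto
  finally show ?thesis .
qed



lemma schur_general:
  fixes Bc W M Pc :: "'a::field mat"
  assumes Bc: "Bc \<in> carrier_mat N E" and N: "N = n1 + n0"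
    and W: "W \<in> carrier_mat E E" and M: "M \<in> carrier_mat E E" and WM: "W * M = 1\<^sub>m E"
    and Mt: "transpose_mat M = M"
    and Pc: "Pc \<in> carrier_mat E k" and B0P: "subm Bc n1 n0 0 E * Pc = 0\<^sub>m n0 k"
    and range: "\<forall>y\<in>carrier_vec E. subm Bc n1 n0 0 E *\<^sub>v y = 0\<^sub>v n0 \<longrightarrow> (\<exists>x\<in>carrier_vec k. y = Pc *\<^sub>v x)"
    and inv1: "invertible_mat (transpose_mat Pc * W * Pc)"
    and inv2: "invertible_mat (subm Bc n1 n0 0 E * M * transpose_mat (subm Bc n1 n0 0 E))"
  shows "subm Bc 0 n1 0 E * Pc * minv (transpose_mat Pc * W * Pc) * transpose_mat Pc * transpose_mat (subm Bc 0 n1 0 E)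
     = schur_compl (Bc * M * transpose_mat Bc) n1 n0"
proof -
  define B1 where "B1 = subm Bc 0 n1 0 E"
  define B0 where "B0 = subm Bc n1 n0 0 E"
  define T where "T = minv (transpose_mat Pc * W * Pc)"
  define Si where "Si = minv (B0 * M * transpose_mat B0)"
  have B1: "B1 \<in> carrier_mat n1 E" and B0: "B0 \<in> carrier_mat n0 E" unfolding B1_def B0_def by auto
  have Pct: "transpose_mat Pc \<in> carrier_mat k E" using Pc by simp
  have B0t: "transpose_mat B0 \<in> carrier_mat E n0" using B0 by simp
  have B1t: "transpose_mat B1 \<in> carrier_mat E n1" using B1 by simp
  have A1: "transpose_mat Pc * W * Pc \<in> carrier_mat k k" by (intro mult_carrier_mat[OF _ Pc] mult_carrier_mat[OF Pct W])
  have S: "B0 * M * transpose_mat B0 \<in> carrier_mat n0 n0" by (intro mult_carrier_mat[OF _ B0t] mult_carrier_mat[OF B0 M])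
  note Tp = minv_props[OF inv1 A1, folded T_def]
  note Sp = minv_props[OF inv2[folded B0_def] S, folded Si_def]
  have G: "Pc * T * transpose_mat Pc = M - M * transpose_mat B0 * Si * B0 * M"
    by (rule core[OF W M WM Pc B0 B0P[folded B0_def] range[folded B0_def] Tp(1) Tp(3) Sp(1) Sp(2)])
  have Y11: "subm (Bc * M * transpose_mat Bc) 0 n1 0 n1 = B1 * M * transpose_mat B1"
    unfolding B1_def using blockY[OF Bc M, of 0 n1 0 n1] N by simp
  have Y10: "subm (Bc * M * transpose_mat Bc) 0 n1 n1 n0 = B1 * M * transpose_mat B0"
    unfolding B1_def B0_def using blockY[OF Bc M, of 0 n1 n1 n0] N by simp
  have Y00: "subm (Bc * M * transpose_mat Bc) n1 n0 n1 n0 = B0 * M * transpose_mat B0"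
    unfolding B0_def using blockY[OF Bc M, of n1 n0 n1 n0] N by simp
  have tr: "transpose_mat (B1 * M * transpose_mat B0) = B0 * M * transpose_mat B1"
  proof -
    have "transpose_mat (B1 * M * transpose_mat B0) = transpose_mat (transpose_mat B0) * transpose_mat (B1 * M)"
      by (rule transpose_mult[OF mult_carrier_mat[OF B1 M] B0t])
    also have "transpose_mat (B1 * M) = transpose_mat M * transpose_mat B1" by (rule transpose_mult[OF B1 M])
    finally show ?thesis using Mt B0 B1 M by (simp add: assoc_dim carrier_matD)
  qed
  have K: "M * transpose_mat B0 * Si * B0 * M \<in> carrier_mat E E" by (intro mult_carrier_mat[OF _ M] mult_carrier_mat[OF _ B0] mult_carrier_mat[OF _ Sp(1)] mult_carrier_mat[OF M B0t])
  have "B1 * Pc * T * transpose_mat Pc * transpose_mat B1 = B1 * (Pc * T * transpose_mat Pc) * transpose_mat B1"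
    using B1 Pc Tp(1) by (simp add: assoc_dim carrier_matD)
  also have "\<dots> = (B1 * M - B1 * (M * transpose_mat B0 * Si * B0 * M)) * transpose_mat B1"
    unfolding G using mult_minus_distrib_mat[OF B1 M K] by simp
  also have "\<dots> = B1 * M * transpose_mat B1 - B1 * (M * transpose_mat B0 * Si * B0 * M) * transpose_mat B1"
    by (rule minus_mult_distrib_mat[OF mult_carrier_mat[OF B1 M] mult_carrier_mat[OF B1 K] B1t])
  also have "B1 * (M * transpose_mat B0 * Si * B0 * M) * transpose_mat B1
      = B1 * M * transpose_mat B0 * Si * (B0 * M * transpose_mat B1)"
    using B1 M B0 Sp(1) by (simp add: assoc_dim carrier_matD)
  finally show ?thesis unfolding schur_compl_def Y11 Y10 Y00 tr
    unfolding B1_def[symmetric] B0_def[symmetric] T_def[symmetric] Si_def[symmetric] .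
qed



lemma mult_diag_vec:
  assumes "y \<in> carrier_vec E" "e < E"
  shows "(mat_diag E d *\<^sub>v y) $ e = d e * y $ e"
proof -
  have "(mat_diag E d *\<^sub>v y) $ e = (\<Sum>j<E. (if e = j then d j else 0) * y $ j)"
    using assms by (simp add: mat_diag_def scalar_prod_def row_def lessThan_atLeast0)
  also have "\<dots> = (\<Sum>j<E. if j = e then d e * y $ e else 0)" by (intro sum.cong) auto
  also have "\<dots> = d e * y $ e" using assms by simp
  finally show ?thesis .
qed

lemma invertible_QtDQ:
  fixes Qr :: "real mat" and d :: "nat \<Rightarrow> complex" and c :: complex
  assumes Qr: "Qr \<in> carrier_mat E k"
    and injQ: "\<forall>x\<in>carrier_vec k. map_mat complex_of_real Qr *\<^sub>v x = 0\<^sub>v E \<longrightarrow> x = 0\<^sub>v k"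
    and pos: "\<forall>e<E. 0 < Re (c * d e)"
  shows "invertible_mat (transpose_mat (map_mat complex_of_real Qr) * mat_diag E d * map_mat complex_of_real Qr)"
proof -
  define Q where "Q = map_mat complex_of_real Qr"
  have Q: "Q \<in> carrier_mat E k" using Qr unfolding Q_def by simp
  have Qt: "transpose_mat Q \<in> carrier_mat k E" using Q by simp
  have D: "mat_diag E d \<in> carrier_mat E E" by simp
  have A: "transpose_mat Q * mat_diag E d * Q \<in> carrier_mat k k"
    by (intro mult_carrier_mat[OF _ Q] mult_carrier_mat[OF Qt D])
  show ?thesis unfolding Q_def[symmetric]
  proof (rule inj_imp_invertible[OF A], intro ballI impI)
    fix x :: "complex vec" assume x: "x \<in> carrier_vec k"
      and Ax: "(transpose_mat Q * mat_diag E d * Q) *\<^sub>v x = 0\<^sub>v k"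
    define y where "y = Q *\<^sub>v x"
    have y: "y \<in> carrier_vec E" unfolding y_def using Q x by simp
    have "(transpose_mat Q * mat_diag E d * Q) *\<^sub>v x = transpose_mat Q *\<^sub>v (mat_diag E d *\<^sub>v y)"
      unfolding y_def using assoc_mult_mat_vec[OF mult_carrier_mat[OF Qt D] Q x]
        assoc_mult_mat_vec[OF Qt D mult_mat_vec_carrier[OF Q x]] by simp
    with Ax have Ax': "transpose_mat Q *\<^sub>v (mat_diag E d *\<^sub>v y) = 0\<^sub>v k" by simp
    have ye: "\<And>e. e < E \<Longrightarrow> y $ e = (\<Sum>i<k. Q $$ (e,i) * x $ i)"
      unfolding y_def using Q x by (simp add: scalar_prod_def row_def lessThan_atLeast0)
    have cye: "\<And>e. e < E \<Longrightarrow> cnj (y $ e) = (\<Sum>i<k. Q $$ (e,i) * cnj (x $ i))"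
      using ye Q Qr unfolding Q_def by (simp add: cnj_sum)
    have Ai: "\<And>i. i < k \<Longrightarrow> (\<Sum>e<E. Q $$ (e,i) * (d e * y $ e)) = 0"
    proof -
      fix i assume i: "i < k"
      have "(transpose_mat Q *\<^sub>v (mat_diag E d *\<^sub>v y)) $ i = (\<Sum>e<E. Q $$ (e,i) * (d e * y $ e))"
      proof -
        have v: "mat_diag E d *\<^sub>v y \<in> carrier_vec E" using mult_mat_vec_carrier[OF D y] .
        have gen: "\<And>v. v \<in> carrier_vec E \<Longrightarrow> (transpose_mat Q *\<^sub>v v) $ i = (\<Sum>e<E. transpose_mat Q $$ (i,e) * v $ e)"
          using i Qt by (simp add: scalar_prod_def row_def lessThan_atLeast0)
        have "(transpose_mat Q *\<^sub>v (mat_diag E d *\<^sub>v y)) $ i = (\<Sum>e<E. transpose_mat Q $$ (i,e) * (mat_diag E d *\<^sub>v y) $ e)"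
          by (rule gen[OF v])
        also have "\<dots> = (\<Sum>e<E. Q $$ (e,i) * (d e * y $ e))"
          using i Q y by (intro sum.cong) (auto simp: mult_diag_vec)
        finally show ?thesis .
      qed
      thus "(\<Sum>e<E. Q $$ (e,i) * (d e * y $ e)) = 0" using Ax' i by simp
    qed
    have "0 = (\<Sum>i<k. cnj (x $ i) * (\<Sum>e<E. Q $$ (e,i) * (d e * y $ e)))" using Ai by simp
    also have "\<dots> = (\<Sum>e<E. d e * y $ e * (\<Sum>i<k. Q $$ (e,i) * cnj (x $ i)))"
      by (simp add: sum_distrib_left sum_distrib_right mult_ac sum.swap[of _ "{..<k}"])
    also have "\<dots> = (\<Sum>e<E. d e * (y $ e * cnj (y $ e)))" using cye by (simp add: mult_ac)
    finally have s0: "(\<Sum>e<E. d e * (y $ e * cnj (y $ e))) = 0" by simp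
    have "(\<Sum>e<E. Re (c * d e) * (cmod (y $ e))^2) = Re (c * (\<Sum>e<E. d e * (y $ e * cnj (y $ e))))"
    proof -
      have pw: "\<And>e. c * (d e * (y $ e * cnj (y $ e))) = (c * d e) * complex_of_real ((cmod (y $ e))^2)"
        by (simp add: complex_norm_square[symmetric] mult_ac)
      have "Re (c * (\<Sum>e<E. d e * (y $ e * cnj (y $ e)))) = (\<Sum>e<E. Re (c * (d e * (y $ e * cnj (y $ e)))))"
        by (simp only: sum_distrib_left Re_sum)
      also have "\<dots> = (\<Sum>e<E. Re ((c * d e) * complex_of_real ((cmod (y $ e))^2)))"
        by (simp only: pw)
      also have "\<dots> = (\<Sum>e<E. Re (c * d e) * (cmod (y $ e))^2)" by simp
      finally show ?thesis by simp
    qed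
    also have "\<dots> = 0" using s0 by simp
    finally have s1: "(\<Sum>e<E. Re (c * d e) * (cmod (y $ e))^2) = 0" .
    have "\<forall>e\<in>{..<E}. Re (c * d e) * (cmod (y $ e))^2 = 0"
      using sum_nonneg_eq_0_iff[of "{..<E}" "\<lambda>e. Re (c * d e) * (cmod (y $ e))^2"] s1 pos
      by (simp add: less_imp_le)
    have "\<And>e. e < E \<Longrightarrow> y $ e = 0"
    proof -
      fix e assume e: "e < E"
      have "Re (c * d e) * (cmod (y $ e))^2 = 0" using \<open>\<forall>e\<in>{..<E}. _\<close> e by simp
      moreover have "Re (c * d e) \<noteq> 0" using pos e by (metis less_irrefl)
      ultimately have "(cmod (y $ e))^2 = 0" by (simp only: mult_eq_0_iff) simp
      thus "y $ e = 0" by simp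
    qed
    hence "y = 0\<^sub>v E" using y by (intro eq_vecI) auto
    thus "x = 0\<^sub>v k" using injQ x unfolding y_def Q_def by blast
  qed
qed



lemma sum_pick: "(\<Sum>i<(n::nat). if n1 + i = a then f i else 0) = (if n1 \<le> a \<and> a < n1 + n then f (a - n1) else (0::'a::comm_monoid_add))"
proof (cases "n1 \<le> a")
  case True
  have "(\<Sum>i<n. if n1 + i = a then f i else 0) = (\<Sum>i<n. if i = a - n1 then f i else 0)"
    by (rule sum.cong[OF refl]) (use True in auto)
  also have "\<dots> = (if a - n1 \<in> {..<n} then f (a - n1) else 0)" by (simp add: sum.delta)
  finally show ?thesis using True by auto
next
  case False
  then show ?thesis by (intro trans[OF sum.neutral]) auto
qed

lemma B0t_inj:
  fixes edges :: "(nat \<times> nat) list"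
  assumes conn: "connected_graph N edges" and n0: "n0 < N" and n1: "n1 = N - n0"
  shows "\<forall>x\<in>carrier_vec n0. map_mat complex_of_real (transpose_mat (subm (incidence N edges :: real mat) n1 n0 0 (length edges))) *\<^sub>v x = 0\<^sub>v (length edges) \<longrightarrow> x = 0\<^sub>v n0"
proof (intro ballI impI)
  fix x :: "complex vec" assume x: "x \<in> carrier_vec n0"
  let ?E = "length edges"
  let ?Bt = "map_mat complex_of_real (transpose_mat (subm (incidence N edges :: real mat) n1 n0 0 ?E))"
  assume z: "?Bt *\<^sub>v x = 0\<^sub>v ?E"
  define yv where "yv u = (if n1 \<le> u \<and> u < n1 + n0 then x $ (u - n1) else 0)" for u
  have hN: "n1 + n0 = N" using n0 n1 by simp
  have valid: "valid_graph N edges" using conn unfolding connected_graph_def by auto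
  have edge: "yv (fst (edges ! e)) = yv (snd (edges ! e))" if e: "e < ?E" for e
  proof -
    define a where "a = fst (edges ! e)"
    define b where "b = snd (edges ! e)"
    have ab: "a < N" "b < N" "a \<noteq> b" using valid e nth_mem[OF e] unfolding valid_graph_def a_def b_def by auto
    have "0 = (?Bt *\<^sub>v x) $ e" using z e by simp
    also have "\<dots> = (\<Sum>i<n0. complex_of_real (if n1 + i = a then 1 else if n1 + i = b then -1 else 0) * x $ i)"
      using e x hN unfolding a_def b_def
      by (simp add: scalar_prod_def subm_def incidence_def lessThan_atLeast0 row_def)
    also have "\<dots> = (\<Sum>i<n0. if n1 + i = a then x $ i else 0) - (\<Sum>i<n0. if n1 + i = b then x $ i else 0)"
      unfolding sum_subtractf[symmetric] using ab by (intro sum.cong refl) auto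
    also have "\<dots> = yv a - yv b" unfolding sum_pick yv_def by simp
    finally show ?thesis unfolding a_def b_def by simp
  qed
  have adj: "yv u = yv v" if "(u, v) \<in> adj_rel edges" for u v
  proof -
    from that have "(u,v) \<in> set edges \<or> (v,u) \<in> set edges" unfolding adj_rel_def by auto
    then show ?thesis
    proof
      assume "(u,v) \<in> set edges"
      then obtain e where "e < ?E" "edges ! e = (u,v)" by (auto simp: in_set_conv_nth)
      with edge[of e] show ?thesis by simp
    next
      assume "(v,u) \<in> set edges"
      then obtain e where "e < ?E" "edges ! e = (v,u)" by (auto simp: in_set_conv_nth)
      with edge[of e] show ?thesis by simp
    qed
  qed
  have rt: "yv u = yv v" if "(u, v) \<in> (adj_rel edges)\<^sup>*" for u v
    using that by (induction rule: rtrancl_induct) (auto dest: adj)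
  have n1pos: "0 < n1" using n0 n1 by simp
  show "x = 0\<^sub>v n0"
  proof (rule eq_vecI)
    fix i assume i: "i < dim_vec (0\<^sub>v n0 :: complex vec)"
    hence i': "i < n0" by simp
    have "(0, n1 + i) \<in> (adj_rel edges)\<^sup>*" using conn i' n1 n0 unfolding connected_graph_def by auto
    hence "yv 0 = yv (n1 + i)" by (rule rt)
    thus "x $ i = 0\<^sub>v n0 $ i" using n1pos i' unfolding yv_def by simp
  qed (use x in simp)
qed



lemma Re_mat_vec: fixes A :: "real mat" and v :: "complex vec"
  assumes A: "A \<in> carrier_mat n m" and v: "v \<in> carrier_vec m"
  shows "map_vec Re (map_mat complex_of_real A *\<^sub>v v) = A *\<^sub>v map_vec Re v"
    "map_vec Im (map_mat complex_of_real A *\<^sub>v v) = A *\<^sub>v map_vec Im v"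
  using A v by (auto intro!: eq_vecI simp: scalar_prod_def Re_sum Im_sum)

lemma complex_range:
  fixes P B0 :: "real mat"
  assumes P: "P \<in> carrier_mat E k" and B0: "B0 \<in> carrier_mat n0 E"
    and P_range: "{P *\<^sub>v x | x. x \<in> carrier_vec k} = {y \<in> carrier_vec E. B0 *\<^sub>v y = 0\<^sub>v n0}"
  shows "\<forall>y\<in>carrier_vec E. map_mat complex_of_real B0 *\<^sub>v y = 0\<^sub>v n0 \<longrightarrow>
      (\<exists>x\<in>carrier_vec k. y = map_mat complex_of_real P *\<^sub>v x)"
proof (intro ballI impI)
  fix y :: "complex vec" assume y: "y \<in> carrier_vec E" and z: "map_mat complex_of_real B0 *\<^sub>v y = 0\<^sub>v n0"
  have zR: "map_vec Re (0\<^sub>v n0) = 0\<^sub>v n0" "map_vec Im (0\<^sub>v n0) = 0\<^sub>v n0" by (auto intro!: eq_vecI)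
  have "B0 *\<^sub>v map_vec Re y = 0\<^sub>v n0" using Re_mat_vec(1)[OF B0 y] z zR by metis
  hence "map_vec Re y \<in> {P *\<^sub>v x | x. x \<in> carrier_vec k}" using P_range y by auto
  then obtain xr where xr: "xr \<in> carrier_vec k" "map_vec Re y = P *\<^sub>v xr" by auto
  have "B0 *\<^sub>v map_vec Im y = 0\<^sub>v n0" using Re_mat_vec(2)[OF B0 y] z zR by metis
  hence "map_vec Im y \<in> {P *\<^sub>v x | x. x \<in> carrier_vec k}" using P_range y by auto
  then obtain xi where xi: "xi \<in> carrier_vec k" "map_vec Im y = P *\<^sub>v xi" by auto
  define x where "x = vec k (\<lambda>l. Complex (xr $ l) (xi $ l))"
  have x: "x \<in> carrier_vec k" unfolding x_def by simp
  have "y = map_mat complex_of_real P *\<^sub>v x"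
  proof (rule eq_vecI)
    fix j assume "j < dim_vec (map_mat complex_of_real P *\<^sub>v x)"
    hence j: "j < E" using P by simp
    have r: "Re (y $ j) = (P *\<^sub>v xr) $ j" "Im (y $ j) = (P *\<^sub>v xi) $ j"
      using xr(2) xi(2) j y by (metis carrier_vecD index_map_vec(1))+
    show "y $ j = (map_mat complex_of_real P *\<^sub>v x) $ j"
      using r j P xr(1) xi(1) y unfolding x_def
      by (intro complex_eqI) (auto simp: scalar_prod_def Re_sum Im_sum)
  qed (use y P in auto)
  thus "\<exists>x\<in>carrier_vec k. y = map_mat complex_of_real P *\<^sub>v x" using x by blast
qed



lemma complex_inj:
  fixes P :: "real mat"
  assumes P: "P \<in> carrier_mat E k"
    and P_rank: "\<forall>x \<in> carrier_vec k. P *\<^sub>v x = 0\<^sub>v E \<longrightarrow> x = 0\<^sub>v k"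
  shows "\<forall>x\<in>carrier_vec k. map_mat complex_of_real P *\<^sub>v x = 0\<^sub>v E \<longrightarrow> x = 0\<^sub>v k"
proof (intro ballI impI)
  fix x :: "complex vec" assume x: "x \<in> carrier_vec k" and z: "map_mat complex_of_real P *\<^sub>v x = 0\<^sub>v E"
  have zR: "map_vec Re (0\<^sub>v E) = 0\<^sub>v E" "map_vec Im (0\<^sub>v E) = 0\<^sub>v E" by (auto intro!: eq_vecI)
  have "P *\<^sub>v map_vec Re x = 0\<^sub>v E" using Re_mat_vec(1)[OF P x] z zR by metis
  hence r: "map_vec Re x = 0\<^sub>v k" using P_rank x by simp
  have "P *\<^sub>v map_vec Im x = 0\<^sub>v E" using Re_mat_vec(2)[OF P x] z zR by metis
  hence i: "map_vec Im x = 0\<^sub>v k" using P_rank x by simp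
  show "x = 0\<^sub>v k"
  proof (rule eq_vecI)
    fix j assume "j < dim_vec (0\<^sub>v k :: complex vec)"
    hence j: "j < k" by simp
    have "Re (x $ j) = 0" "Im (x $ j) = 0"
      using arg_cong[OF r, of "\<lambda>v. v $ j"] arg_cong[OF i, of "\<lambda>v. v $ j"] x j by auto
    thus "x $ j = 0\<^sub>v k $ j" using j by (simp add: complex_eq_iff)
  qed (use x in simp)
qed

lemma B0P_real:
  fixes P B0 :: "real mat"
  assumes P: "P \<in> carrier_mat E k" and B0: "B0 \<in> carrier_mat n0 E"
    and P_range: "{P *\<^sub>v x | x. x \<in> carrier_vec k} = {y \<in> carrier_vec E. B0 *\<^sub>v y = 0\<^sub>v n0}"
  shows "B0 * P = 0\<^sub>m n0 k"
proof (rule eq_matI)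
  fix i j assume i: "i < dim_row (0\<^sub>m n0 k :: real mat)" and j: "j < dim_col (0\<^sub>m n0 k :: real mat)"
  hence i': "i < n0" and j': "j < k" by auto
  have cP: "col P j = P *\<^sub>v unit_vec k j"
    using P j' by (intro eq_vecI) auto
  have "P *\<^sub>v unit_vec k j \<in> {P *\<^sub>v x | x. x \<in> carrier_vec k}" using j' by auto
  hence "B0 *\<^sub>v (P *\<^sub>v unit_vec k j) = 0\<^sub>v n0" using P_range by auto
  hence "(B0 *\<^sub>v col P j) $ i = 0" using cP i' by simp
  thus "(B0 * P) $$ (i, j) = 0\<^sub>m n0 k $$ (i, j)" using i' j' B0 P by simp
qed (use B0 P in auto)

lemma minv_diag:
  assumes "\<forall>e<E. d e \<noteq> (0::'a::field)"
  shows "minv (mat_diag E d) = mat_diag E (\<lambda>e. inverse (d e))"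
proof (rule minv_unique)
  show "mat_diag E d * mat_diag E (\<lambda>e. inverse (d e)) = 1\<^sub>m E"
    unfolding mat_diag_diag using assms by (auto intro!: eq_matI simp: mat_diag_def)
  show "mat_diag E (\<lambda>e. inverse (d e)) * mat_diag E d = 1\<^sub>m E"
    unfolding mat_diag_diag using assms by (auto intro!: eq_matI simp: mat_diag_def)
qed auto

lemma transpose_diag: "transpose_mat (mat_diag E d) = mat_diag E d"
  by (auto intro!: eq_matI simp: mat_diag_def)



lemma pos_Z: "0 < w \<Longrightarrow> 0 < l \<Longrightarrow> 0 < Re (- \<i> * (complex_of_real r + \<i> * complex_of_real w * complex_of_real l))"
  by simp

lemma pos_Zinv: "0 < w \<Longrightarrow> 0 < l \<Longrightarrow> 0 < Re (\<i> * inverse (complex_of_real r + \<i> * complex_of_real w * complex_of_real l))"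
proof -
  assume a: "0 < w" "0 < l"
  have "0 < w * l" using a by simp
  moreover have "0 < r * r + w * l * (w * l)"
    using \<open>0 < w * l\<close> by (intro add_nonneg_pos) auto
  ultimately have "0 < w * l / (r * r + w * l * (w * l))" by simp
  thus ?thesis by (simp add: power2_eq_square)
qed



theorem proposition1:
  fixes N n0 k :: nat and edges :: "(nat \<times> nat) list"
    and w :: "nat \<Rightarrow> complex" and P :: "real mat"
    and r l :: "nat \<Rightarrow> real" and \<omega> :: real
  defines "E \<equiv> length edges"
  defines "n1 \<equiv> N - n0"
  defines "B \<equiv> (incidence N edges :: real mat)"
  defines "Bc \<equiv> map_mat complex_of_real B"
  defines "B1 \<equiv> subm Bc 0 n1 0 E"
  defines "B0 \<equiv> subm B n1 n0 0 E"
  defines "Pc \<equiv> map_mat complex_of_real P"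
  defines "W \<equiv> mat_diag E w"
  assumes conn: "connected_graph N edges"
    and n0_pos: "0 < n0" and n0_lt: "n0 < N"
    and P_dim: "P \<in> carrier_mat E k"
    and P_rank: "\<forall>x \<in> carrier_vec k. P *\<^sub>v x = 0\<^sub>v E \<longrightarrow> x = 0\<^sub>v k"
    and P_range: "{P *\<^sub>v x | x. x \<in> carrier_vec k} = {y \<in> carrier_vec E. B0 *\<^sub>v y = 0\<^sub>v n0}"
    and w_nz: "\<forall>e < E. w e \<noteq> 0"
    and inv1: "invertible_mat (transpose_mat Pc * W * Pc)"
    and inv2: "invertible_mat (subm Bc n1 n0 0 E * minv W * transpose_mat (subm Bc n1 n0 0 E))"
    and r_nn: "\<forall>e < E. 0 \<le> r e" and l_pos: "\<forall>e < E. 0 < l e" and \<omega>_pos: "0 < \<omega>"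
  shows
    "B1 * Pc * minv (transpose_mat Pc * W * Pc) * transpose_mat Pc * transpose_mat B1
       = schur_compl (Bc * minv W * transpose_mat Bc) n1 n0
     \<and> (let Z = mat_diag E (\<lambda>e. complex_of_real (r e) + \<i> * complex_of_real \<omega> * complex_of_real (l e))
        in B1 * Pc * minv (transpose_mat Pc * Z * Pc) * transpose_mat Pc * transpose_mat B1
             = schur_compl (Bc * minv Z * transpose_mat Bc) n1 n0)
     \<and> (let L = mat_diag E (\<lambda>e. complex_of_real (l e))
        in B1 * Pc * minv (transpose_mat Pc * L * Pc) * transpose_mat Pc * transpose_mat B1
             = schur_compl (Bc * minv L * transpose_mat Bc) n1 n0)"
proof -
  have hN: "N = n1 + n0" unfolding n1_def using n0_lt by simp
  have Bcar: "B \<in> carrier_mat N E" unfolding B_def E_def incidence_def by simp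
  have Bc: "Bc \<in> carrier_mat N E" unfolding Bc_def using Bcar by simp
  have B0: "B0 \<in> carrier_mat n0 E" unfolding B0_def by simp
  have Pc: "Pc \<in> carrier_mat E k" unfolding Pc_def using P_dim by simp
  have B0c: "subm Bc n1 n0 0 E = map_mat complex_of_real B0"
    unfolding B0_def Bc_def using Bcar hN by (intro eq_matI) (auto simp: subm_def)
  have B0Pc: "subm Bc n1 n0 0 E * Pc = 0\<^sub>m n0 k"
  proof -
    have "subm Bc n1 n0 0 E * Pc = map_mat complex_of_real (B0 * P)"
      unfolding B0c Pc_def by (rule of_real_hom.mat_hom_mult[OF B0 P_dim, symmetric])
    also have "B0 * P = 0\<^sub>m n0 k" by (rule B0P_real[OF P_dim B0 P_range])
    finally show ?thesis by (auto intro!: eq_matI)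
  qed
  have rangec: "\<forall>y\<in>carrier_vec E. subm Bc n1 n0 0 E *\<^sub>v y = 0\<^sub>v n0 \<longrightarrow> (\<exists>x\<in>carrier_vec k. y = Pc *\<^sub>v x)"
    unfolding B0c Pc_def by (rule complex_range[OF P_dim B0 P_range])
  have B0t: "transpose_mat B0 \<in> carrier_mat E n0" using B0 by simp
  have injB: "\<forall>x\<in>carrier_vec n0. map_mat complex_of_real (transpose_mat B0) *\<^sub>v x = 0\<^sub>v E \<longrightarrow> x = 0\<^sub>v n0"
    unfolding B0_def B_def E_def using B0t_inj[OF conn n0_lt n1_def[THEN meta_eq_to_obj_eq]] .
  have injP: "\<forall>x\<in>carrier_vec k. map_mat complex_of_real P *\<^sub>v x = 0\<^sub>v E \<longrightarrow> x = 0\<^sub>v k"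
    by (rule complex_inj[OF P_dim P_rank])
  have trB: "transpose_mat (map_mat complex_of_real (transpose_mat B0)) = subm Bc n1 n0 0 E"
    unfolding B0c by auto
  have gen: "B1 * Pc * minv (transpose_mat Pc * mat_diag E d * Pc) * transpose_mat Pc * transpose_mat B1
       = schur_compl (Bc * minv (mat_diag E d) * transpose_mat Bc) n1 n0"
    if dnz: "\<forall>e<E. d e \<noteq> 0"
      and i1: "invertible_mat (transpose_mat Pc * mat_diag E d * Pc)"
      and i2: "invertible_mat (subm Bc n1 n0 0 E * minv (mat_diag E d) * transpose_mat (subm Bc n1 n0 0 E))"
    for d
  proof -
    have Md: "minv (mat_diag E d) = mat_diag E (\<lambda>e. inverse (d e))" by (rule minv_diag[OF dnz])
    have WM: "mat_diag E d * minv (mat_diag E d) = 1\<^sub>m E"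
      unfolding Md mat_diag_diag using dnz by (auto intro!: eq_matI simp: mat_diag_def)
    show ?thesis unfolding B1_def
      by (rule schur_general[OF Bc hN mat_diag_dim _ WM _ Pc B0Pc rangec i1 i2])
        (auto simp: Md transpose_diag)
  qed
  have part1: "B1 * Pc * minv (transpose_mat Pc * W * Pc) * transpose_mat Pc * transpose_mat B1
       = schur_compl (Bc * minv W * transpose_mat Bc) n1 n0"
    unfolding W_def by (rule gen[OF w_nz inv1[unfolded W_def] inv2[unfolded W_def]])
  have part_gen: "B1 * Pc * minv (transpose_mat Pc * mat_diag E d * Pc) * transpose_mat Pc * transpose_mat B1
       = schur_compl (Bc * minv (mat_diag E d) * transpose_mat Bc) n1 n0"
    if p1: "\<forall>e<E. 0 < Re (c1 * d e)" and p2: "\<forall>e<E. 0 < Re (c2 * inverse (d e))" for d c1 c2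
  proof -
    have dnz: "\<forall>e<E. d e \<noteq> 0" using p1 by (metis mult_zero_right zero_complex.simps(1) less_irrefl)
    have Md: "minv (mat_diag E d) = mat_diag E (\<lambda>e. inverse (d e))" by (rule minv_diag[OF dnz])
    have i1: "invertible_mat (transpose_mat Pc * mat_diag E d * Pc)"
      unfolding Pc_def by (rule invertible_QtDQ[OF P_dim injP p1])
    have i2: "invertible_mat (subm Bc n1 n0 0 E * minv (mat_diag E d) * transpose_mat (subm Bc n1 n0 0 E))"
      using invertible_QtDQ[OF B0t injB p2] unfolding Md trB[symmetric] by simp
    show ?thesis by (rule gen[OF dnz i1 i2])
  qed
  have part2: "let Z = mat_diag E (\<lambda>e. complex_of_real (r e) + \<i> * complex_of_real \<omega> * complex_of_real (l e))
        in B1 * Pc * minv (transpose_mat Pc * Z * Pc) * transpose_mat Pc * transpose_mat B1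
             = schur_compl (Bc * minv Z * transpose_mat Bc) n1 n0"
    unfolding Let_def
    by (rule part_gen[of "- \<i>" _ "\<i>"]) (use l_pos \<omega>_pos pos_Z pos_Zinv in auto)
  have part3: "let L = mat_diag E (\<lambda>e. complex_of_real (l e))
        in B1 * Pc * minv (transpose_mat Pc * L * Pc) * transpose_mat Pc * transpose_mat B1
             = schur_compl (Bc * minv L * transpose_mat Bc) n1 n0"
    unfolding Let_def
    by (rule part_gen[of 1 _ 1]) (use l_pos in auto)
  show ?thesis using part1 part2 part3 by blast
qed


end
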